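(* Let $S_{r,N}$ be a nontrivial atomic exponential Puiseux semiring. Then for every $k\in\mathbb{N}$ and every positive integer $n$, $r^{s_k}$ does not divide $\sum_{i=1}^{n}r^{s_{k+i}}$ in $S_{r,N}$. Consequently, $S_{r,N}$ is not strongly primary.
   Context: $\mathbb{N}=\{0,1,2,\dots\}$. A numerical monoid $N$ is an additive submonoid of $\mathbb{N}$ with finite complement; let $s_0<s_1<\cdots$ be its elements. For $r\in\mathbb{Q}_{>0}$ write $r=\mathsf{n}(r)/\mathsf{d}(r)$ in lowest terms. $S_{r,N}$ is the additive submonoid of $\mathbb{Q}_{\ge0}$ generated by $\{r^k:k\in N\}$; nontrivial means $r\notin\mathbb{N}$, and then it is atomic iff $\mathsf{n}(r)>1$. In a monoid $M$, $y\mid_M w$ means $w-y\in M$. A (commutative, cancellative) monoid $M$ with group of units $M^\times$ is strongly primary if $M\neq M^\times$ and for every $x\in M\setminus M^\times$ there exists $n\in\mathbb{N}$ such that every sum of $n$ elements of $M\setminus M^\times$ is divisible by $x$ (i.e., $(M\setminus M^\times)^n\subseteq x+M$ in additive notation). *)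

theory Defs
  imports Complex_Main "HOL-Library.Infinite_Set"
begin

definition numerical_monoid :: "nat set \<Rightarrow> bool" where
  "numerical_monoid N \<longleftrightarrow> 0 \<in> N \<and> (\<forall>a\<in>N. \<forall>b\<in>N. a + b \<in> N) \<and> finite (UNIV - N)"

text \<open>The k-th element s_k of N in increasing order (s_0 < s_1 < ...).\<close>
definition nm_elem :: "nat set \<Rightarrow> nat \<Rightarrow> nat" where
  "nm_elem N k = enumerate N k"

definition numer :: "rat \<Rightarrow> int" where "numer r = fst (quotient_of r)"
definition denom :: "rat \<Rightarrow> int" where "denom r = snd (quotient_of r)"

inductive_set add_monoid_gen :: "rat set \<Rightarrow> rat set" for A :: "rat set" where
  zero: "0 \<in> add_monoid_gen A"
| gen: "a \<in> A \<Longrightarrow> a \<in> add_monoid_gen A"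
| add: "x \<in> add_monoid_gen A \<Longrightarrow> y \<in> add_monoid_gen A \<Longrightarrow> x + y \<in> add_monoid_gen A"

definition exp_puiseux :: "rat \<Rightarrow> nat set \<Rightarrow> rat set" where
  "exp_puiseux r N = add_monoid_gen {r ^ k | k. k \<in> N}"

definition mdvd :: "rat set \<Rightarrow> rat \<Rightarrow> rat \<Rightarrow> bool" where
  "mdvd M y w \<longleftrightarrow> w - y \<in> M"

definition munits :: "rat set \<Rightarrow> rat set" where
  "munits M = {x \<in> M. - x \<in> M}"

definition strongly_primary :: "rat set \<Rightarrow> bool" where
  "strongly_primary M \<longleftrightarrow> M \<noteq> munits M \<and>
     (\<forall>x \<in> M - munits M. \<exists>n::nat. \<forall>xs. length xs = n \<and> set xs \<subseteq> M - munits M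
        \<longrightarrow> mdvd M x (sum_list xs))"

end

theory Submission
  imports Defs
begin

lemma key_int:
  fixes a b :: int and p :: "nat \<Rightarrow> int" and K D :: nat
  assumes a: "a > 0" and b: "b \<ge> 2" and cop: "coprime a b" and KD: "K < D"
    and lo: "\<forall>j<K. p j \<le> 0" and mid: "p K < 0" and hi: "\<forall>j>K. p j \<le> 1"
    and eq: "(\<Sum>j<D. p j * a ^ j * b ^ (D - 1 - j)) = 0"
  shows False
proof -
  define T where "T m = (\<Sum>j\<in>{..m}. p j * a ^ j * b ^ (m - j))" for m
  have rec: "T (Suc m) = b * T m + p (Suc m) * a ^ Suc m" for m
  proof -
    have "T (Suc m) = (\<Sum>j\<in>{..m}. p j * a ^ j * b ^ (Suc m - j)) + p (Suc m) * a ^ Suc m"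
      unfolding T_def by simp
    also have "(\<Sum>j\<in>{..m}. p j * a ^ j * b ^ (Suc m - j)) = b * T m"
      unfolding T_def sum_distrib_left
      by (rule sum.cong) (auto simp: Suc_diff_le)
    finally show ?thesis by simp
  qed
  have dv: "a ^ (m+1) dvd T m" if "m < D" for m
  proof -
    have split: "{..<D} = {..m} \<union> {m<..<D}" using that by auto
    have "(\<Sum>j<D. p j * a ^ j * b ^ (D - 1 - j)) =
          (\<Sum>j\<in>{..m}. p j * a ^ j * b ^ (D - 1 - j)) + (\<Sum>j\<in>{m<..<D}. p j * a ^ j * b ^ (D - 1 - j))"
      unfolding split by (rule sum.union_disjoint) auto
    moreover have "(\<Sum>j\<in>{..m}. p j * a ^ j * b ^ (D - 1 - j)) = b ^ (D - 1 - m) * T m"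
      unfolding T_def sum_distrib_left
    proof (rule sum.cong)
      fix j assume "j \<in> {..m}"
      hence "D - 1 - j = (D - 1 - m) + (m - j)" using that by auto
      thus "p j * a ^ j * b ^ (D - 1 - j) = b ^ (D - 1 - m) * (p j * a ^ j * b ^ (m - j))"
        by (simp add: power_add)
    qed simp
    moreover have "a ^ (m+1) dvd (\<Sum>j\<in>{m<..<D}. p j * a ^ j * b ^ (D - 1 - j))"
    proof (rule dvd_sum)
      fix j assume "j \<in> {m<..<D}"
      hence "j = (m+1) + (j - (m+1))" by auto
      hence "a ^ j = a ^ (m+1) * a ^ (j - (m+1))" by (metis power_add)
      thus "a ^ (m+1) dvd p j * a ^ j * b ^ (D - 1 - j)" by simp
    qed
    ultimately have "a ^ (m+1) dvd b ^ (D - 1 - m) * T m" using eq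
      by (metis add.commute add_left_cancel add.right_neutral dvd_minus_iff minus_unique)
    moreover have "coprime (a ^ (m+1)) (b ^ (D - 1 - m))" using cop by simp
    ultimately show ?thesis using coprime_dvd_mult_right_iff by blast
  qed
  have le: "T m \<le> - (a ^ (m+1))" if h: "m < D" "T m < 0" for m
  proof -
    obtain c where c: "T m = a ^ (m+1) * c" using dv[OF h(1)] by blast
    have ap: "a ^ (m+1) > 0" using a by simp
    hence "c < 0" using h(2) c by (metis mult_nonneg_nonneg less_le_not_le not_less)
    hence "c \<le> -1" by simp
    hence "a ^ (m+1) * c \<le> a ^ (m+1) * (-1)" using ap by (intro mult_left_mono) auto
    thus ?thesis using c by simp
  qed
  have nonpos: "T m \<le> 0" if "m < K" for m
    unfolding T_def
  proof (rule sum_nonpos)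
    fix j assume "j \<in> {..m}"
    hence "p j \<le> 0" using lo that by auto
    moreover have "a ^ j * b ^ (m - j) \<ge> 0" using a b by simp
    ultimately show "p j * a ^ j * b ^ (m - j) \<le> 0"
      by (metis mult.assoc mult_nonpos_nonneg)
  qed
  have TK: "T K < 0"
  proof (cases K)
    case 0 thus ?thesis using mid by (simp add: T_def)
  next
    case (Suc k)
    have "T k \<le> 0" using nonpos Suc by simp
    hence "b * T k \<le> 0" using b by (simp add: mult_nonneg_nonpos)
    moreover have "p K * a ^ K < 0" using mid a by (simp add: mult_neg_pos)
    ultimately show ?thesis using rec[of k] Suc by simp
  qed
  have neg: "T m < 0" if "K \<le> m" "m < D" for m
    using that
  proof (induction m rule: dec_induct)
    case base thus ?case using TK by simp
  next
    case (step m)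
    have "T m \<le> - (a ^ (m+1))" using le step by simp
    hence "b * T m \<le> b * (- (a ^ (m+1)))" using b by (intro mult_left_mono) auto
    moreover have "p (Suc m) * a ^ Suc m \<le> a ^ Suc m"
      using hi step a by (simp add: mult_le_cancel_right1)
    moreover have "b * (- (a ^ (m+1))) + a ^ Suc m < 0"
    proof -
      have "a ^ Suc m > 0" using a by simp
      hence "b * (a ^ Suc m) \<ge> 2 * a ^ Suc m" using b by (intro mult_right_mono) auto
      thus ?thesis using \<open>a ^ Suc m > 0\<close> by simp
    qed
    ultimately show ?case using rec[of m] by simp
  qed
  have "T (D - 1) = (\<Sum>j<D. p j * a ^ j * b ^ (D - 1 - j))"
    unfolding T_def using KD by (intro sum.cong) auto
  moreover have "T (D - 1) < 0" using neg[of "D - 1"] KD by simp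
  ultimately show False using eq by simp
qed

lemma rep:
  assumes "x \<in> exp_puiseux r N"
  shows "\<exists>c::nat\<Rightarrow>nat. \<exists>D. \<forall>D'\<ge>D. x = (\<Sum>j<D'. of_nat (c j) * r ^ j)"
  using assms unfolding exp_puiseux_def
proof (induction rule: add_monoid_gen.induct)
  case zero
  show ?case by (rule exI[of _ "\<lambda>_. 0"]) simp
next
  case (gen a)
  then obtain k where a: "a = r ^ k" by blast
  show ?case
  proof (intro exI allI impI)
    fix D' :: nat assume "Suc k \<le> D'"
    hence "(\<Sum>j<D'. of_nat (if j = k then 1 else 0) * r ^ j) = (\<Sum>j<D'. if j = k then r ^ j else 0)"
      by (intro sum.cong) auto
    also have "\<dots> = r ^ k" using \<open>Suc k \<le> D'\<close> by (simp add: sum.delta')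
    finally show "a = (\<Sum>j<D'. of_nat (if j = k then 1 else 0) * r ^ j)" using a by simp
  qed
next
  case (add x y)
  then obtain c1 D1 c2 D2 where
    1: "\<forall>D'\<ge>D1. x = (\<Sum>j<D'. of_nat (c1 j) * r ^ j)" and
    2: "\<forall>D'\<ge>D2. y = (\<Sum>j<D'. of_nat (c2 j) * r ^ j)" by blast
  show ?case
  proof (intro exI allI impI)
    fix D' assume "max D1 D2 \<le> D'"
    hence "x = (\<Sum>j<D'. of_nat (c1 j) * r ^ j)" "y = (\<Sum>j<D'. of_nat (c2 j) * r ^ j)"
      using 1 2 by auto
    thus "x + y = (\<Sum>j<D'. of_nat (c1 j + c2 j) * r ^ j)"
      by (simp add: sum.distrib distrib_right)
  qed
qed

lemma nonneg:
  assumes "r > 0" "x \<in> exp_puiseux r N"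
  shows "x \<ge> 0"
  using assms(2) unfolding exp_puiseux_def
  by (induction rule: add_monoid_gen.induct) (use assms(1) in auto)

lemma gen_in:
  assumes "k \<in> N"
  shows "r ^ k \<in> exp_puiseux r N"
  unfolding exp_puiseux_def using assms by (intro add_monoid_gen.gen) auto

lemma rat_to_int:
  fixes a b :: int and p :: "nat \<Rightarrow> int" and r :: rat
  assumes b: "b \<noteq> 0" and r: "r = of_int a / of_int b"
    and eq: "(\<Sum>j<D. of_int (p j) * r ^ j) = 0"
  shows "(\<Sum>j<D. p j * a ^ j * b ^ (D - 1 - j)) = 0"
proof -
  have "of_int (\<Sum>j<D. p j * a ^ j * b ^ (D - 1 - j)) =
        (of_int b :: rat) ^ (D - 1) * (\<Sum>j<D. of_int (p j) * r ^ j)"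
    unfolding of_int_sum sum_distrib_left
  proof (rule sum.cong)
    fix j assume "j \<in> {..<D}"
    hence e: "D - 1 = j + (D - 1 - j)" by auto
    have "(of_int b :: rat) ^ (D - 1) * (of_int (p j) * r ^ j)
        = of_int (p j) * (r ^ j * of_int b ^ j) * of_int b ^ (D - 1 - j)"
      by (subst e, simp add: power_add algebra_simps)
    also have "r ^ j * of_int b ^ j = of_int a ^ j"
      using b by (simp add: r power_divide)
    finally have "(of_int b :: rat) ^ (D - 1) * (of_int (p j) * r ^ j) =
        of_int (p j) * of_int a ^ j * of_int b ^ (D - 1 - j)" by (simp add: mult_ac)
    thus "of_int (p j * a ^ j * b ^ (D - 1 - j)) =
        (of_int b :: rat) ^ (D - 1) * (of_int (p j) * r ^ j)" by (metis of_int_mult of_int_power)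
  qed simp
  thus ?thesis using eq by (metis mult_zero_right of_int_eq_0_iff)
qed

lemma part1:
  fixes r :: rat and a b :: int
  assumes rpos: "r > 0" and inf: "infinite N" and r: "r = of_int a / of_int b"
    and a: "a > 0" and b: "b \<ge> 2" and cop: "coprime a b" and n: "n > 0"
  shows "\<not> mdvd (exp_puiseux r N) (r ^ enumerate N k) (\<Sum>i=1..n. r ^ enumerate N (k + i))"
proof
  define s where "s = enumerate N"
  have smono: "s x < s y \<longleftrightarrow> x < y" "s x \<le> s y \<longleftrightarrow> x \<le> y" for x y
    using inf by (simp_all add: s_def)
  assume "mdvd (exp_puiseux r N) (r ^ enumerate N k) (\<Sum>i=1..n. r ^ enumerate N (k + i))"
  hence "(\<Sum>i=1..n. r ^ s (k + i)) - r ^ s k \<in> exp_puiseux r N"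
    by (simp add: mdvd_def s_def)
  then obtain c :: "nat \<Rightarrow> nat" and D0 where
    c: "\<forall>D'\<ge>D0. (\<Sum>i=1..n. r ^ s (k + i)) - r ^ s k = (\<Sum>j<D'. of_nat (c j) * r ^ j)"
    using rep by blast
  define D where "D = max D0 (Suc (s (k + n)))"
  define E where "E = (\<lambda>i. s (k + i)) ` {1..n}"
  have inj: "inj_on (\<lambda>i. s (k + i)) {1..n}"
    by (rule inj_onI) (metis add_left_cancel smono(2) order_antisym order_refl)
  have Esub: "E \<subseteq> {..<D}"
  proof
    fix j assume "j \<in> E"
    then obtain i where "i \<le> n" "j = s (k + i)" unfolding E_def by auto
    hence "j \<le> s (k + n)" using smono(2) by simp
    thus "j \<in> {..<D}" unfolding D_def by simp
  qed
  have Egt: "s k < j" if "j \<in> E" for j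
    using that smono(1) unfolding E_def by auto
  have skD: "s k < D" unfolding D_def using smono(1)[of k "k+n"] n by simp
  have sum1: "(\<Sum>j<D. (if j \<in> E then r ^ j else 0)) = (\<Sum>i=1..n. r ^ s (k + i))"
  proof -
    have "(\<Sum>j<D. (if j \<in> E then r ^ j else 0)) = (\<Sum>j\<in>{..<D} \<inter> E. r ^ j)"
      by (simp add: sum.inter_restrict)
    also have "{..<D} \<inter> E = E" using Esub by auto
    also have "(\<Sum>j\<in>E. r ^ j) = (\<Sum>i=1..n. r ^ s (k + i))"
      unfolding E_def using sum.reindex[OF inj, of "\<lambda>j. r ^ j"] by (simp add: o_def)
    finally show ?thesis .
  qed
  have sum2: "(\<Sum>j<D. (if j = s k then r ^ j else 0)) = r ^ s k"
    using skD by (simp add: sum.delta')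
  have sum3: "(\<Sum>i=1..n. r ^ s (k + i)) - r ^ s k = (\<Sum>j<D. of_nat (c j) * r ^ j)"
    using c unfolding D_def by simp
  define p where "p j = (if j \<in> E then 1 else 0) - (if j = s k then 1 else 0) - int (c j)" for j
  have "(\<Sum>j<D. of_int (p j) * r ^ j) =
        (\<Sum>j<D. (if j \<in> E then r ^ j else 0)) - (\<Sum>j<D. (if j = s k then r ^ j else 0))
         - (\<Sum>j<D. of_nat (c j) * r ^ j)"
    unfolding sum_subtractf[symmetric] by (intro sum.cong) (auto simp: p_def algebra_simps)
  also have "\<dots> = 0" using sum1 sum2 sum3 by simp
  finally have "(\<Sum>j<D. of_int (p j) * r ^ j) = 0" .
  hence eqi: "(\<Sum>j<D. p j * a ^ j * b ^ (D - 1 - j)) = 0"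
    using rat_to_int[OF _ r] b by simp
  show False
  proof (rule key_int[OF a b cop skD _ _ _ eqi])
    show "\<forall>j<s k. p j \<le> 0" using Egt by (force simp: p_def)
    show "p (s k) < 0" using Egt by (auto simp: p_def)
    show "\<forall>j>s k. p j \<le> 1" by (auto simp: p_def)
  qed
qed

theorem mainTheorem17:
  fixes r :: rat and N :: "nat set"
  assumes "numerical_monoid N"
    and "r > 0"
    and "r \<notin> \<nat>"
    and "numer r > 1"
  shows "(\<forall>k n. n > 0 \<longrightarrow>
            \<not> mdvd (exp_puiseux r N) (r ^ nm_elem N k)
                 (\<Sum>i=1..n. r ^ nm_elem N (k + i)))
         \<and> \<not> strongly_primary (exp_puiseux r N)"
proof -
  define a where "a = numer r"
  define b where "b = denom r"
  have q: "quotient_of r = (a, b)" by (simp add: a_def b_def numer_def denom_def)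
  have bpos: "b > 0" using quotient_of_denom_pos[OF q] .
  have cop: "coprime a b" using quotient_of_coprime[OF q] .
  have r: "r = of_int a / of_int b" using quotient_of_div[OF q] .
  have apos: "a > 0"
  proof -
    have "of_int a = r * of_int b" using r bpos by simp
    moreover have "r * of_int b > 0" using assms(2) bpos by simp
    ultimately show ?thesis by simp
  qed
  have b2: "b \<ge> 2"
  proof (rule ccontr)
    assume "\<not> b \<ge> 2"
    hence "b = 1" using bpos by simp
    hence "r = of_nat (nat a)" using r apos by simp
    thus False using assms(3) by simp
  qed
  have N0: "0 \<in> N" and fin: "finite (UNIV - N)"
    using assms(1) unfolding numerical_monoid_def by auto
  have inf: "infinite N"
  proof
    assume "finite N"
    hence "finite (N \<union> (UNIV - N))" using fin by simp
    thus False by simp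
  qed
  define M where "M = exp_puiseux r N"
  have P1: "\<forall>k n. n > 0 \<longrightarrow> \<not> mdvd M (r ^ nm_elem N k) (\<Sum>i=1..n. r ^ nm_elem N (k + i))"
    unfolding M_def nm_elem_def using part1[OF assms(2) inf r apos b2 cop] by blast
  have s0: "nm_elem N 0 = 0"
    unfolding nm_elem_def enumerate_0 using N0 by (simp add: Least_eq_0)
  have noneg: "x \<in> M \<Longrightarrow> x < 0 \<Longrightarrow> False" for x
    using nonneg[OF assms(2)] unfolding M_def by force
  have one: "1 \<in> M - munits M"
    using gen_in[OF N0, of r] noneg[of "-1"] unfolding M_def munits_def by auto
  have "\<not> strongly_primary M"
  proof
    assume "strongly_primary M"
    then obtain n :: nat where H: "\<forall>xs. length xs = n \<and> set xs \<subseteq> M - munits M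
        \<longrightarrow> mdvd M 1 (sum_list xs)"
      using one unfolding strongly_primary_def by blast
    show False
    proof (cases "n = 0")
      case True
      hence "mdvd M 1 (sum_list [])" using H by auto
      thus False using noneg[of "-1"] by (simp add: mdvd_def)
    next
      case False
      define xs where "xs = map (\<lambda>i. r ^ nm_elem N i) [1..<n+1]"
      have "set xs \<subseteq> M - munits M"
      proof
        fix x assume "x \<in> set xs"
        then obtain i where x: "x = r ^ nm_elem N i" unfolding xs_def by auto
        have "x \<in> M" unfolding x M_def nm_elem_def
          by (rule gen_in) (rule enumerate_in_set[OF inf])
        moreover have "x > 0" using x assms(2) by simp
        ultimately show "x \<in> M - munits M" using noneg[of "-x"] unfolding munits_def by auto
      qed
      moreover have "length xs = n" unfolding xs_def by simp
      ultimately have "mdvd M 1 (sum_list xs)" using H by blast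
      moreover have "sum_list xs = (\<Sum>i=1..n. r ^ nm_elem N (0 + i))"
      proof -
        have "sum_list xs = (\<Sum>i\<in>set [1..<n+1]. r ^ nm_elem N i)"
          unfolding xs_def by (rule sum_set_upt_conv_sum_list_nat[symmetric])
        also have "set [1..<n+1] = {1..n}" by auto
        finally show ?thesis by simp
      qed
      ultimately show False using P1[rule_format, of n 0] False s0 by simp
    qed
  qed
  thus ?thesis using P1 unfolding M_def by blast
qed

end
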